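(* Let $G=(V,E)$ be a finite connected graph with positive edge weights $(\theta_e)$, let $T(G)$ be its universal cover with covering map $\pi:T(G)\to G$ (edge weights inherited through $\pi$), and fix $z>0$. Let $\mathbf{y}(z)\in(0,\infty)^{\vec{E}}$ be the unique solution of $\mathbf{y}(z)=z\mathcal{R}_G(\mathbf{y}(z))$ and $\tilde{\mathbf{y}}(z)\in(0,\infty)^{\vec{E}(T(G))}$ the unique solution of $\tilde{\mathbf{y}}(z)=z\mathcal{R}_{T(G)}(\tilde{\mathbf{y}}(z))$. Then $\tilde{y}_{\vec{e}}(z)=y_{\pi(\vec{e})}(z)$ for every directed edge $\vec{e}$ of $T(G)$.
   Context: For a weighted graph $H$ with directed edge set $\vec{E}$ (two orientations $u\to v$, $v\to u$ per edge $uv$), the map $\mathcal{R}_H:(0,\infty)^{\vec{E}}\to(0,\infty)^{\vec{E}}$ is $\mathcal{R}_H(\mathbf{a})_{u\to v}=\big(1+\sum_{w\in\partial u\setminus v}\theta_{wu}a_{w\to u}\big)^{-1}$, where $\partial u\setminus v$ is the set of neighbours of $u$ other than $v$ and empty sums are $0$; $z\mathcal{R}_H$ multiplies each component by $z$. The universal cover $T(G)$ is the tree whose vertices are the finite non-backtracking walks in $G$ from a fixed vertex, two walks adjacent if one is a one-step extension of the other; $\pi$ maps a walk to its endpoint (and edges/directed edges accordingly). Existence and uniqueness of both fixed points are given. *)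

theory Defs
  imports Complex_Main
begin

text \<open>Directed edges are pairs (u,v) with adj u v.  Vectors indexed by directed
  edges are functions on pairs; only their values on directed edges matter.\<close>

definition RH :: "('v \<Rightarrow> 'v \<Rightarrow> bool) \<Rightarrow> ('v \<Rightarrow> 'v \<Rightarrow> real) \<Rightarrow> ('v \<times> 'v \<Rightarrow> real) \<Rightarrow> ('v \<times> 'v \<Rightarrow> real)" where
  "RH adj th a = (\<lambda>(u, v). 1 / (1 + (\<Sum>w\<in>{w. adj w u \<and> w \<noteq> v}. th w u * a (w, u))))"

definition is_pos_fp :: "('v \<Rightarrow> 'v \<Rightarrow> bool) \<Rightarrow> ('v \<Rightarrow> 'v \<Rightarrow> real) \<Rightarrow> real \<Rightarrow> ('v \<times> 'v \<Rightarrow> real) \<Rightarrow> bool" where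
  "is_pos_fp adj th z a \<longleftrightarrow>
     (\<forall>u v. adj u v \<longrightarrow> a (u, v) > 0 \<and> a (u, v) = z * RH adj th a (u, v))"

definition nb_walks :: "('a \<Rightarrow> 'a \<Rightarrow> bool) \<Rightarrow> 'a \<Rightarrow> 'a list set" where
  "nb_walks E v0 = {xs. xs \<noteq> [] \<and> hd xs = v0 \<and>
      (\<forall>i. i + 1 < length xs \<longrightarrow> E (xs ! i) (xs ! (i + 1))) \<and>
      (\<forall>i. i + 2 < length xs \<longrightarrow> xs ! (i + 2) \<noteq> xs ! i)}"

text \<open>Adjacency of the universal cover T(G): one walk is a one-step extension of the other.\<close>
definition cover_adj :: "('a \<Rightarrow> 'a \<Rightarrow> bool) \<Rightarrow> 'a \<Rightarrow> 'a list \<Rightarrow> 'a list \<Rightarrow> bool" where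
  "cover_adj E v0 xs ys \<longleftrightarrow> xs \<in> nb_walks E v0 \<and> ys \<in> nb_walks E v0 \<and>
      ((\<exists>x. ys = xs @ [x]) \<or> (\<exists>x. xs = ys @ [x]))"

definition cover_proj :: "'a list \<Rightarrow> 'a" where
  "cover_proj xs = last xs"

definition cover_weight :: "('a \<Rightarrow> 'a \<Rightarrow> real) \<Rightarrow> 'a list \<Rightarrow> 'a list \<Rightarrow> real" where
  "cover_weight th xs ys = th (cover_proj xs) (cover_proj ys)"

end

theory Submission
  imports Defs
begin


lemma snoc_nb:
  assumes "xs \<in> nb_walks E v0"
  shows "(xs @ [x] \<in> nb_walks E v0) \<longleftrightarrow>
    (E (last xs) x \<and> (2 \<le> length xs \<longrightarrow> x \<noteq> xs ! (length xs - 2)))"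
proof -
  from assms have ne: "xs \<noteq> []" and h: "hd xs = v0"
    and a1: "\<forall>i. i + 1 < length xs \<longrightarrow> E (xs ! i) (xs ! (i + 1))"
    and a2: "\<forall>i. i + 2 < length xs \<longrightarrow> xs ! (i + 2) \<noteq> xs ! i"
    by (auto simp: nb_walks_def)
  have L: "last xs = xs ! (length xs - 1)" using ne by (simp add: last_conv_nth)
  show ?thesis
  proof
    assume "xs @ [x] \<in> nb_walks E v0"
    then have b1: "\<forall>i. i + 1 < length xs + 1 \<longrightarrow> E ((xs@[x]) ! i) ((xs@[x]) ! (i + 1))"
      and b2: "\<forall>i. i + 2 < length xs + 1 \<longrightarrow> (xs@[x]) ! (i + 2) \<noteq> (xs@[x]) ! i"
      by (auto simp: nb_walks_def)
    from b1[rule_format, of "length xs - 1"] ne have "E (last xs) x"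
      by (auto simp: L nth_append)
    moreover have "2 \<le> length xs \<longrightarrow> x \<noteq> xs ! (length xs - 2)"
    proof
      assume "2 \<le> length xs"
      then have k: "length xs - 2 + 2 = length xs" "length xs - 2 < length xs" by auto
      have "(xs@[x]) ! (length xs - 2 + 2) \<noteq> (xs@[x]) ! (length xs - 2)"
      proof -
        have "length xs - 2 + 2 < length xs + 1" using k by simp
        thus ?thesis using b2 by blast
      qed
      then show "x \<noteq> xs ! (length xs - 2)" using k by (simp add: nth_append)
    qed
    ultimately show "E (last xs) x \<and> (2 \<le> length xs \<longrightarrow> x \<noteq> xs ! (length xs - 2))" ..
  next
    assume c: "E (last xs) x \<and> (2 \<le> length xs \<longrightarrow> x \<noteq> xs ! (length xs - 2))"
    have "\<forall>i. i + 1 < length (xs@[x]) \<longrightarrow> E ((xs@[x]) ! i) ((xs@[x]) ! (i + 1))"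
    proof (intro allI impI)
      fix i assume i: "i + 1 < length (xs@[x])"
      show "E ((xs@[x]) ! i) ((xs@[x]) ! (i + 1))"
      proof (cases "i + 1 < length xs")
        case True thus ?thesis using a1 by (simp add: nth_append)
      next
        case False
        then have "i = length xs - 1" using i by simp
        thus ?thesis using c ne False L by (simp add: nth_append)
      qed
    qed
    moreover have "\<forall>i. i + 2 < length (xs@[x]) \<longrightarrow> (xs@[x]) ! (i + 2) \<noteq> (xs@[x]) ! i"
    proof (intro allI impI)
      fix i assume i: "i + 2 < length (xs@[x])"
      show "(xs@[x]) ! (i + 2) \<noteq> (xs@[x]) ! i"
      proof (cases "i + 2 < length xs")
        case True thus ?thesis using a2 by (simp add: nth_append)
      next
        case False
        then have "i = length xs - 2" "2 \<le> length xs" using i by auto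
        thus ?thesis using c False by (simp add: nth_append)
      qed
    qed
    ultimately show "xs @ [x] \<in> nb_walks E v0" using ne h by (simp add: nb_walks_def)
  qed
qed

lemma butlast_nb:
  assumes "xs @ [x] \<in> nb_walks E v0" "xs \<noteq> []"
  shows "xs \<in> nb_walks E v0"
proof -
  from assms have h: "hd (xs@[x]) = v0"
    and a1: "\<forall>i. i + 1 < length xs + 1 \<longrightarrow> E ((xs@[x]) ! i) ((xs@[x]) ! (i + 1))"
    and a2: "\<forall>i. i + 2 < length xs + 1 \<longrightarrow> (xs@[x]) ! (i + 2) \<noteq> (xs@[x]) ! i"
    by (auto simp: nb_walks_def)
  have "\<forall>i. i + 1 < length xs \<longrightarrow> E (xs ! i) (xs ! (i + 1))"
  proof (intro allI impI)
    fix i assume "i + 1 < length xs"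
    with a1[rule_format, of i] show "E (xs ! i) (xs ! (i + 1))" by (simp add: nth_append)
  qed
  moreover have "\<forall>i. i + 2 < length xs \<longrightarrow> xs ! (i + 2) \<noteq> xs ! i"
  proof (intro allI impI)
    fix i assume "i + 2 < length xs"
    with a2[rule_format, of i] show "xs ! (i + 2) \<noteq> xs ! i" by (simp add: nth_append)
  qed
  ultimately show ?thesis using assms(2) h by (simp add: nb_walks_def)
qed


lemma cover_adj_sym: "cover_adj E v0 xs ys = cover_adj E v0 ys xs"
  unfolding cover_adj_def by blast

lemma nbrs_char:
  assumes xs: "xs \<in> nb_walks E v0"
  shows "cover_adj E v0 ws xs \<longleftrightarrow>
    ((2 \<le> length xs \<and> ws = butlast xs) \<or> (\<exists>w. ws = xs @ [w] \<and> xs @ [w] \<in> nb_walks E v0))"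
proof
  assume "cover_adj E v0 ws xs"
  then have w: "ws \<in> nb_walks E v0" and d: "(\<exists>x. xs = ws @ [x]) \<or> (\<exists>x. ws = xs @ [x])"
    by (auto simp: cover_adj_def)
  from w have ne: "ws \<noteq> []" by (simp add: nb_walks_def)
  from d show "((2 \<le> length xs \<and> ws = butlast xs) \<or> (\<exists>w. ws = xs @ [w] \<and> xs @ [w] \<in> nb_walks E v0))"
  proof
    assume "\<exists>x. xs = ws @ [x]"
    then obtain x where x: "xs = ws @ [x]" by blast
    have "length ws \<ge> 1" using ne by (cases ws) simp_all
    then have "2 \<le> length xs" using x by simp
    moreover have "ws = butlast xs" using x by simp
    ultimately show ?thesis by blast
  next
    assume "\<exists>x. ws = xs @ [x]"
    then obtain x where x: "ws = xs @ [x]" by blast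
    show ?thesis using x w by blast
  qed
next
  assume "((2 \<le> length xs \<and> ws = butlast xs) \<or> (\<exists>w. ws = xs @ [w] \<and> xs @ [w] \<in> nb_walks E v0))"
  then show "cover_adj E v0 ws xs"
  proof
    assume a: "2 \<le> length xs \<and> ws = butlast xs"
    have xne: "xs \<noteq> []" using xs by (simp add: nb_walks_def)
    then have eq: "xs = ws @ [last xs]" using a by simp
    have ne: "ws \<noteq> []" using a by (cases xs) auto
    have "ws \<in> nb_walks E v0" using butlast_nb[of ws "last xs"] eq xs ne by simp
    thus ?thesis using xs eq unfolding cover_adj_def by blast
  next
    assume "\<exists>w. ws = xs @ [w] \<and> xs @ [w] \<in> nb_walks E v0"
    thus ?thesis using xs unfolding cover_adj_def by blast
  qed
qed

lemma last_butlast_nth: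
  assumes "2 \<le> length xs" shows "last (butlast xs) = xs ! (length xs - 2)"
proof -
  have ne: "butlast xs \<noteq> []" using assms by (cases xs) auto
  have "last (butlast xs) = butlast xs ! (length (butlast xs) - 1)" using ne by (rule last_conv_nth)
  also have "\<dots> = xs ! (length xs - 2)" using assms by (simp add: nth_butlast numeral_2_eq_2)
  finally show ?thesis .
qed

lemma nbrs_bij:
  assumes xs: "xs \<in> nb_walks E v0" and E_sym: "\<And>u v. E u v \<Longrightarrow> E v u"
  shows "inj_on last {ws. cover_adj E v0 ws xs}"
    and "last ` {ws. cover_adj E v0 ws xs} = {w. E w (last xs)}"
proof -
  have ne: "xs \<noteq> []" using xs by (simp add: nb_walks_def)
  have par: "2 \<le> length xs \<Longrightarrow> E (xs ! (length xs - 2)) (last xs)"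
  proof -
    assume l: "2 \<le> length xs"
    have eq: "xs = butlast xs @ [last xs]" using ne by simp
    have bne: "butlast xs \<noteq> []" using l by (cases xs) auto
    have "butlast xs \<in> nb_walks E v0" using butlast_nb[of "butlast xs" "last xs"] eq xs bne by simp
    then have "E (last (butlast xs)) (last xs)" using snoc_nb[of "butlast xs" E v0 "last xs"] eq xs by simp
    thus ?thesis using last_butlast_nth[OF l] by simp
  qed
  show "inj_on last {ws. cover_adj E v0 ws xs}"
  proof (rule inj_onI)
    fix a b assume a: "a \<in> {ws. cover_adj E v0 ws xs}" and b: "b \<in> {ws. cover_adj E v0 ws xs}"
      and ab: "last a = last b"
    from a b have ca: "(2 \<le> length xs \<and> a = butlast xs) \<or> (\<exists>w. a = xs @ [w] \<and> xs @ [w] \<in> nb_walks E v0)"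
      and cb: "(2 \<le> length xs \<and> b = butlast xs) \<or> (\<exists>w. b = xs @ [w] \<and> xs @ [w] \<in> nb_walks E v0)"
      using nbrs_char[OF xs] by auto
    have child: "last c \<noteq> xs ! (length xs - 2)" if "2 \<le> length xs"
        "\<exists>w. c = xs @ [w] \<and> xs @ [w] \<in> nb_walks E v0" for c
    proof -
      from that(2) obtain w where w: "c = xs @ [w]" "xs @ [w] \<in> nb_walks E v0" by blast
      then have "w \<noteq> xs ! (length xs - 2)" using snoc_nb[OF xs, of w] that(1) by simp
      thus ?thesis using w by simp
    qed
    show "a = b"
    proof (cases "2 \<le> length xs \<and> a = butlast xs")
      case A: True
      show ?thesis
      proof (cases "2 \<le> length xs \<and> b = butlast xs")
        case True thus ?thesis using A by simp
      next
        case False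
        then have "\<exists>w. b = xs @ [w] \<and> xs @ [w] \<in> nb_walks E v0" using cb by blast
        then have "last b \<noteq> xs ! (length xs - 2)" using child A by blast
        moreover have "last a = xs ! (length xs - 2)" using A last_butlast_nth by blast
        ultimately show ?thesis using ab by simp
      qed
    next
      case A: False
      then obtain w where w: "a = xs @ [w]" using ca by blast
      show ?thesis
      proof (cases "2 \<le> length xs \<and> b = butlast xs")
        case B: True
        have "last a \<noteq> xs ! (length xs - 2)" using child B ca A by blast
        moreover have "last b = xs ! (length xs - 2)" using B last_butlast_nth by blast
        ultimately show ?thesis using ab by simp
      next
        case False
        then obtain w' where "b = xs @ [w']" using cb by blast
        thus ?thesis using w ab by simp
      qed
    qed
  qed
  show "last ` {ws. cover_adj E v0 ws xs} = {w. E w (last xs)}"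
  proof
    show "last ` {ws. cover_adj E v0 ws xs} \<subseteq> {w. E w (last xs)}"
    proof
      fix w assume "w \<in> last ` {ws. cover_adj E v0 ws xs}"
      then obtain a where a: "cover_adj E v0 a xs" and w: "w = last a" by auto
      from a have "(2 \<le> length xs \<and> a = butlast xs) \<or> (\<exists>w. a = xs @ [w] \<and> xs @ [w] \<in> nb_walks E v0)"
        using nbrs_char[OF xs] by auto
      thus "w \<in> {w. E w (last xs)}"
      proof
        assume A: "2 \<le> length xs \<and> a = butlast xs"
        then have "w = xs ! (length xs - 2)" using w last_butlast_nth by blast
        thus ?thesis using par A by simp
      next
        assume "\<exists>w. a = xs @ [w] \<and> xs @ [w] \<in> nb_walks E v0"
        then obtain u where u: "a = xs @ [u]" "xs @ [u] \<in> nb_walks E v0" by blast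
        then have "E (last xs) u" using snoc_nb[OF xs, of u] by simp
        thus ?thesis using u w E_sym by simp
      qed
    qed
  next
    show "{w. E w (last xs)} \<subseteq> last ` {ws. cover_adj E v0 ws xs}"
    proof
      fix w assume "w \<in> {w. E w (last xs)}"
      then have e: "E w (last xs)" by simp
      show "w \<in> last ` {ws. cover_adj E v0 ws xs}"
      proof (cases "2 \<le> length xs \<and> w = xs ! (length xs - 2)")
        case True
        then have "cover_adj E v0 (butlast xs) xs" using nbrs_char[OF xs] by auto
        moreover have "last (butlast xs) = w" using True last_butlast_nth by auto
        ultimately show ?thesis by force
      next
        case False
        then have "xs @ [w] \<in> nb_walks E v0" using snoc_nb[OF xs] e E_sym by auto
        then have "cover_adj E v0 (xs @ [w]) xs" using nbrs_char[OF xs] by auto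
        thus ?thesis by force
      qed
    qed
  qed
qed

theorem proposition4p11:
  fixes V :: "'a set" and E :: "'a \<Rightarrow> 'a \<Rightarrow> bool" and th :: "'a \<Rightarrow> 'a \<Rightarrow> real"
    and v0 :: 'a and z :: real
    and y :: "'a \<times> 'a \<Rightarrow> real" and yt :: "'a list \<times> 'a list \<Rightarrow> real"
  assumes finV: "finite V"
    and E_in_V: "\<And>u v. E u v \<Longrightarrow> u \<in> V \<and> v \<in> V"
    and E_sym: "\<And>u v. E u v \<Longrightarrow> E v u"
    and E_irrefl: "\<And>u. \<not> E u u"
    and connected: "\<And>u v. u \<in> V \<Longrightarrow> v \<in> V \<Longrightarrow> E\<^sup>*\<^sup>* u v"
    and th_pos: "\<And>u v. E u v \<Longrightarrow> th u v > 0"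
    and th_sym: "\<And>u v. th u v = th v u"
    and v0: "v0 \<in> V"
    and z: "z > 0"
    and y_fp: "is_pos_fp E th z y"
    and y_unique: "\<And>b. is_pos_fp E th z b \<Longrightarrow> (\<forall>u v. E u v \<longrightarrow> b (u, v) = y (u, v))"
    and yt_fp: "is_pos_fp (cover_adj E v0) (cover_weight th) z yt"
    and yt_unique: "\<And>b. is_pos_fp (cover_adj E v0) (cover_weight th) z b \<Longrightarrow>
        (\<forall>xs ys. cover_adj E v0 xs ys \<longrightarrow> b (xs, ys) = yt (xs, ys))"
  shows "\<forall>xs ys. cover_adj E v0 xs ys \<longrightarrow> yt (xs, ys) = y (cover_proj xs, cover_proj ys)"
proof -
  define b where "b = (\<lambda>(xs, ys). y (last xs, last ys))"
  have edge: "E (last xs) (last ys)" if c: "cover_adj E v0 xs ys" for xs ys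
  proof -
    from c have xs: "xs \<in> nb_walks E v0" and ys: "ys \<in> nb_walks E v0"
      and d: "(\<exists>x. ys = xs @ [x]) \<or> (\<exists>x. xs = ys @ [x])" by (auto simp: cover_adj_def)
    from d show ?thesis
    proof
      assume "\<exists>x. ys = xs @ [x]" then obtain x where "ys = xs @ [x]" by blast
      thus ?thesis using snoc_nb[OF xs] ys by simp
    next
      assume "\<exists>x. xs = ys @ [x]" then obtain x where "xs = ys @ [x]" by blast
      thus ?thesis using snoc_nb[OF ys] xs E_sym by simp
    qed
  qed
  have "is_pos_fp (cover_adj E v0) (cover_weight th) z b"
    unfolding is_pos_fp_def
  proof (intro allI impI)
    fix xs ys assume c: "cover_adj E v0 xs ys"
    have e: "E (last xs) (last ys)" using edge[OF c] .
    have xs: "xs \<in> nb_walks E v0" using c by (simp add: cover_adj_def)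
    have ysN: "ys \<in> {ws. cover_adj E v0 ws xs}" using c cover_adj_sym[of E v0 xs ys] by simp
    have inj: "inj_on last {ws. cover_adj E v0 ws xs}"
      by (rule nbrs_bij(1)[OF xs], erule E_sym)
    have img: "last ` {ws. cover_adj E v0 ws xs} = {w. E w (last xs)}"
      by (rule nbrs_bij(2)[OF xs], erule E_sym)
    define g where "g = (\<lambda>u. th u (last xs) * y (u, last xs))"
    have setA: "{w. cover_adj E v0 w xs \<and> w \<noteq> ys} = {ws. cover_adj E v0 ws xs} - {ys}" by auto
    have "last ` ({ws. cover_adj E v0 ws xs} - {ys}) = {w. E w (last xs)} - {last ys}"
    proof -
      have "{ys} \<subseteq> {ws. cover_adj E v0 ws xs}" using ysN by blast
      then have "last ` ({ws. cover_adj E v0 ws xs} - {ys}) = last ` {ws. cover_adj E v0 ws xs} - last ` {ys}"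
        by (rule inj_on_image_set_diff[OF inj Diff_subset])
      thus ?thesis unfolding img by simp
    qed
    also have "\<dots> = {w. E w (last xs) \<and> w \<noteq> last ys}" by auto
    finally have imgA: "last ` ({ws. cover_adj E v0 ws xs} - {ys}) = {w. E w (last xs) \<and> w \<noteq> last ys}" .
    have injA: "inj_on last ({ws. cover_adj E v0 ws xs} - {ys})" using inj by (rule inj_on_subset) auto
    have "(\<Sum>w\<in>{w. cover_adj E v0 w xs \<and> w \<noteq> ys}. cover_weight th w xs * b (w, xs))
        = (\<Sum>w\<in>{ws. cover_adj E v0 ws xs} - {ys}. g (last w))"
      unfolding setA by (simp add: g_def b_def cover_weight_def cover_proj_def)
    also have "\<dots> = (\<Sum>u\<in>{w. E w (last xs) \<and> w \<noteq> last ys}. g u)"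
      using sum.reindex[OF injA, of g] unfolding imgA comp_def by (rule sym)
    finally have S: "(\<Sum>w\<in>{w. cover_adj E v0 w xs \<and> w \<noteq> ys}. cover_weight th w xs * b (w, xs))
        = (\<Sum>u\<in>{w. E w (last xs) \<and> w \<noteq> last ys}. th u (last xs) * y (u, last xs))"
      by (simp add: g_def)
    have fp: "y (last xs, last ys) > 0 \<and> y (last xs, last ys) = z * RH E th y (last xs, last ys)"
      using y_fp e unfolding is_pos_fp_def by blast
    show "b (xs, ys) > 0 \<and> b (xs, ys) = z * RH (cover_adj E v0) (cover_weight th) b (xs, ys)"
      using fp S by (simp add: b_def RH_def)
  qed
  from yt_unique[OF this] show ?thesis by (simp add: b_def cover_proj_def)
qed

end
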